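(* Let $b,c_1,c_2$ be positive integers and let $\alpha/\beta$ be the right lobster $\mathcal{L}^{c_1,c_2}_b$, with $c_1$, $b$, $c_2$ cells in the top, middle and bottom rows respectively. Then the length of the longest chain in the poset $\mathrm{SET}(\alpha/\beta)$ is $$\mathrm{rank}(\mathrm{SET}(\alpha/\beta))=\begin{cases}c_2(b+c_1)-\binom{c_1+1}{2} & \text{if } c_1\le c_2,\\ bc_1+\binom{c_2}{2} & \text{if } c_1>c_2.\end{cases}$$
   Context: Rows are numbered from the bottom. The right lobster $\mathcal{L}^{c_1,c_2}_b$ is the skew diagram $\alpha/\beta$ with $\alpha=(b+1+c_2,b+1,b+1+c_1)$, $\beta=(b+1,1,b+1)$: a bottom row of $c_2$ cells in columns $b+2,\ldots,b+1+c_2$, a middle row of $b$ cells in columns $2,\ldots,b+1$, and a top row of $c_1$ cells in columns $b+2,\ldots,b+1+c_1$. $\mathrm{SET}(\alpha/\beta)$ is the set of bijective fillings with $1,\ldots,N$ ($N=b+c_1+c_2$) whose rows increase left to right and columns increase bottom to top. For $1\le i\le N-1$, $\pi_i(T)=T$ if $i+1$ is in a strictly higher row than $i$, $\pi_i(T)=s_i(T)$ (swap $i$ and $i+1$) if $i+1$ is in a strictly lower row than $i$, and $\pi_i(T)=0$ otherwise; the poset order is $T\le T'$ iff $T'$ is obtained from $T$ by a sequence of operators $\pi_i$ (all intermediate results nonzero). The length of a chain $x_0<x_1<\cdots<x_r$ is $r$. *)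

theory Defs
  imports Main
begin

text \<open>Cells are pairs (row, column); rows numbered 1 (bottom), 2 (middle), 3 (top).\<close>

definition lobster_cells :: "nat \<Rightarrow> nat \<Rightarrow> nat \<Rightarrow> (nat \<times> nat) set" where
  "lobster_cells b c1 c2 =
     {(1, j) | j. b + 2 \<le> j \<and> j \<le> b + 1 + c2} \<union>
     {(2, j) | j. 2 \<le> j \<and> j \<le> b + 1} \<union>
     {(3, j) | j. b + 2 \<le> j \<and> j \<le> b + 1 + c1}"

definition SET :: "(nat \<times> nat) set \<Rightarrow> ((nat \<times> nat) \<Rightarrow> nat) set" where
  "SET D = {T. bij_betw T D {1..card D} \<and> (\<forall>x. x \<notin> D \<longrightarrow> T x = 0)
      \<and> (\<forall>r j j'. (r, j) \<in> D \<longrightarrow> (r, j') \<in> D \<longrightarrow> j < j' \<longrightarrow> T (r, j) < T (r, j'))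
      \<and> (\<forall>r r' j. (r, j) \<in> D \<longrightarrow> (r', j) \<in> D \<longrightarrow> r < r' \<longrightarrow> T (r, j) < T (r', j))}"

definition swap_entries :: "nat \<Rightarrow> ((nat \<times> nat) \<Rightarrow> nat) \<Rightarrow> ((nat \<times> nat) \<Rightarrow> nat)" where
  "swap_entries i T = (\<lambda>x. if T x = i then i + 1 else if T x = i + 1 then i else T x)"

definition higher :: "(nat \<times> nat) set \<Rightarrow> ((nat \<times> nat) \<Rightarrow> nat) \<Rightarrow> nat \<Rightarrow> bool" where
  "higher D T i = (\<exists>x\<in>D. \<exists>y\<in>D. T x = i \<and> T y = i + 1 \<and> fst x < fst y)"

definition lower :: "(nat \<times> nat) set \<Rightarrow> ((nat \<times> nat) \<Rightarrow> nat) \<Rightarrow> nat \<Rightarrow> bool" where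
  "lower D T i = (\<exists>x\<in>D. \<exists>y\<in>D. T x = i \<and> T y = i + 1 \<and> fst y < fst x)"

text \<open>One application of a bubble-sorting operator pi_i with nonzero result.\<close>

definition pi_step :: "(nat \<times> nat) set \<Rightarrow> ((nat \<times> nat) \<Rightarrow> nat) \<Rightarrow> ((nat \<times> nat) \<Rightarrow> nat) \<Rightarrow> bool" where
  "pi_step D T T' = (T \<in> SET D \<and> (\<exists>i. 1 \<le> i \<and> i + 1 \<le> card D \<and>
      ((higher D T i \<and> T' = T) \<or> (lower D T i \<and> T' = swap_entries i T))))"

definition set_le :: "(nat \<times> nat) set \<Rightarrow> ((nat \<times> nat) \<Rightarrow> nat) \<Rightarrow> ((nat \<times> nat) \<Rightarrow> nat) \<Rightarrow> bool" where
  "set_le D T T' = (T \<in> SET D \<and> T' \<in> SET D \<and> (pi_step D)\<^sup>*\<^sup>* T T')"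

definition set_less :: "(nat \<times> nat) set \<Rightarrow> ((nat \<times> nat) \<Rightarrow> nat) \<Rightarrow> ((nat \<times> nat) \<Rightarrow> nat) \<Rightarrow> bool" where
  "set_less D T T' = (set_le D T T' \<and> T \<noteq> T')"

text \<open>A chain x_0 < x_1 < ... < x_r, given as a nonempty list; its length is r.\<close>

definition is_chain :: "(nat \<times> nat) set \<Rightarrow> ((nat \<times> nat) \<Rightarrow> nat) list \<Rightarrow> bool" where
  "is_chain D xs = (xs \<noteq> [] \<and> set xs \<subseteq> SET D \<and> sorted_wrt (set_less D) xs)"

end

theory Submission
  imports Defs
begin



definition Inv :: "(nat \<times> nat) set \<Rightarrow> ((nat \<times> nat) \<Rightarrow> nat) \<Rightarrow> ((nat \<times> nat) \<times> (nat \<times> nat)) set" where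
  "Inv D T = {(x,y). x \<in> D \<and> y \<in> D \<and> fst y < fst x \<and> T x < T y}"

lemma finite_Inv: "finite D \<Longrightarrow> finite (Inv D T)"
  by (rule finite_subset[of _ "D \<times> D"]) (auto simp: Inv_def)

lemma swap_props:
  assumes T: "T \<in> SET D" and fin: "finite D"
    and x: "x \<in> D" and y: "y \<in> D" and Tx: "T x = i" and Ty: "T y = i + 1" and xy: "fst y < fst x"
  shows "swap_entries i T \<in> SET D \<and> Inv D (swap_entries i T) = Inv D T - {(x,y)} \<and> (x,y) \<in> Inv D T"
proof -
  have bij: "bij_betw T D {1..card D}" and zero: "\<And>z. z \<notin> D \<Longrightarrow> T z = 0"
    and rows: "\<And>r j j'. (r, j) \<in> D \<Longrightarrow> (r, j') \<in> D \<Longrightarrow> j < j' \<Longrightarrow> T (r, j) < T (r, j')"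
    and cols: "\<And>r r' j. (r, j) \<in> D \<Longrightarrow> (r', j) \<in> D \<Longrightarrow> r < r' \<Longrightarrow> T (r, j) < T (r', j)"
    using T unfolding SET_def by auto
  have inj: "inj_on T D" and img: "T ` D = {1..card D}" using bij unfolding bij_betw_def by auto
  have i1: "1 \<le> i" using Tx x img by force
  have i2: "i + 1 \<le> card D" using Ty y img by force
  have xny: "x \<noteq> y" using xy by auto
  define T' where "T' = swap_entries i T"
  have T'x: "T' x = i + 1" and T'y: "T' y = i" using Tx Ty unfolding T'_def swap_entries_def by auto
  have Tno: "T z \<noteq> i \<and> T z \<noteq> i + 1" if "z \<noteq> x" "z \<noteq> y" for z
  proof (cases "z \<in> D")
    case True then show ?thesis using inj x y Tx Ty that by (metis inj_on_eq_iff)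
  next
    case False then show ?thesis using zero i1 by auto
  qed
  have T'o: "T' z = T z" if "z \<noteq> x" "z \<noteq> y" for z
    using Tno[OF that] unfolding T'_def swap_entries_def by auto
  have ord: "(T' u < T' v) = (T u < T v)"
    if nxy: "\<not>(u = x \<and> v = y)" "\<not>(u = y \<and> v = x)" for u v
  proof -
    consider "u = v" | "u = x" "v \<noteq> x" "v \<noteq> y" | "u = y" "v \<noteq> x" "v \<noteq> y"
      | "v = x" "u \<noteq> x" "u \<noteq> y" | "v = y" "u \<noteq> x" "u \<noteq> y"
      | "u \<noteq> x" "u \<noteq> y" "v \<noteq> x" "v \<noteq> y" using nxy by blast
    then show ?thesis
    proof cases
      case 2 then show ?thesis using T'x T'o Tno[of v] Tx by auto
    next
      case 3 then show ?thesis using T'y T'o Tno[of v] Ty by auto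
    next
      case 4 then show ?thesis using T'x T'o Tno[of u] Tx by auto
    next
      case 5 then show ?thesis using T'y T'o Tno[of u] Ty by auto
    qed (auto simp: T'o)
  qed
  have T'eq: "T' z = (if z = x then i + 1 else if z = y then i else T z)" for z
    using T'x T'y T'o by auto
  have inj': "inj_on T' D"
  proof (rule inj_onI)
    fix u v assume u: "u \<in> D" and v: "v \<in> D" and e: "T' u = T' v"
    show "u = v"
    proof (rule ccontr)
      assume "u \<noteq> v"
      then have "T u \<noteq> T v" using inj u v by (metis inj_on_eq_iff)
      then show False using e T'eq[of u] T'eq[of v] Tno[of u] Tno[of v] Tx Ty \<open>u \<noteq> v\<close> by (auto split: if_splits)
    qed
  qed
  have img': "T' ` D = {1..card D}"
  proof
    show "T' ` D \<subseteq> {1..card D}"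
    proof
      fix w assume "w \<in> T' ` D"
      then obtain z where z: "z \<in> D" "w = T' z" by auto
      show "w \<in> {1..card D}" using z T'eq[of z] img i1 i2 by (auto split: if_splits)
    qed
  next
    show "{1..card D} \<subseteq> T' ` D"
    proof
      fix w assume "w \<in> {1..card D}"
      then have "w \<in> T ` D" using img by simp
      then obtain z where z: "z \<in> D" "w = T z" by blast
      show "w \<in> T' ` D"
      proof (cases "z = x")
        case True then show ?thesis using z T'y y Tx by (metis image_eqI)
      next
        case False
        show ?thesis
        proof (cases "z = y")
          case True then show ?thesis using z T'x x Ty by (metis image_eqI)
        next
          case False2: False
          then show ?thesis using z T'o False by (metis image_eqI)
        qed
      qed
    qed
  qed
  have zero': "T' z = 0" if "z \<notin> D" for z
    using that x y zero T'o by metis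
  have rows': "T' (r, j) < T' (r, j')" if "(r, j) \<in> D" "(r, j') \<in> D" "j < j'" for r j j'
  proof -
    have "\<not>((r,j) = x \<and> (r,j') = y)" "\<not>((r,j) = y \<and> (r,j') = x)" using xy by auto
    then show ?thesis using ord[of "(r,j)" "(r,j')"] rows[OF that] by blast
  qed
  have cols': "T' (r, j) < T' (r', j)" if "(r, j) \<in> D" "(r', j) \<in> D" "r < r'" for r r' j
  proof (cases "(r,j) = y \<and> (r',j) = x")
    case True then show ?thesis using T'x T'y by auto
  next
    case False
    have "\<not>((r,j) = x \<and> (r',j) = y)" using xy that(3) by auto
    then show ?thesis using ord[of "(r,j)" "(r',j)"] cols[OF that] False by blast
  qed
  have S: "T' \<in> SET D" unfolding SET_def bij_betw_def using inj' img' zero' rows' cols' by blast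
  have I: "Inv D T' = Inv D T - {(x,y)}"
  proof -
    have "(u,v) \<in> Inv D T' \<longleftrightarrow> (u,v) \<in> Inv D T - {(x,y)}" for u v
    proof (cases "(u = x \<and> v = y) \<or> (u = y \<and> v = x)")
      case True then show ?thesis using T'x T'y xy unfolding Inv_def by auto
    next
      case False then show ?thesis using ord[of u v] unfolding Inv_def by auto
    qed
    then show ?thesis by auto
  qed
  have "(x,y) \<in> Inv D T" using x y Tx Ty xy unfolding Inv_def by auto
  then show ?thesis using S I T'_def by simp
qed


lemma step_props:
  assumes "pi_step D T T'" "finite D"
  shows "T' \<in> SET D \<and> (T' = T \<or> card (Inv D T') < card (Inv D T))"
proof -
  have T: "T \<in> SET D" using assms unfolding pi_step_def by auto
  from assms obtain i where i: "(higher D T i \<and> T' = T) \<or> (lower D T i \<and> T' = swap_entries i T)"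
    unfolding pi_step_def by auto
  then show ?thesis
  proof
    assume "higher D T i \<and> T' = T" then show ?thesis using T by auto
  next
    assume h: "lower D T i \<and> T' = swap_entries i T"
    then obtain x y where xy: "x \<in> D" "y \<in> D" "T x = i" "T y = i + 1" "fst y < fst x"
      unfolding lower_def by auto
    have "T' \<in> SET D \<and> Inv D T' = Inv D T - {(x,y)} \<and> (x,y) \<in> Inv D T"
      using swap_props[OF T assms(2) xy] h by simp
    moreover have "finite (Inv D T)" using finite_Inv assms(2) by auto
    ultimately show ?thesis by (metis card_Diff1_less)
  qed
qed

lemma star_props:
  assumes "(pi_step D)\<^sup>*\<^sup>* T T'" "finite D" "T \<in> SET D"
  shows "T' \<in> SET D \<and> (T' = T \<or> card (Inv D T') < card (Inv D T))"
  using assms(1)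
proof (induction rule: rtranclp_induct)
  case base then show ?case using assms by simp
next
  case (step Y Z)
  then show ?case using step_props[OF step(2) assms(2)] by auto
qed

lemma less_card: "set_less D T T' \<Longrightarrow> finite D \<Longrightarrow> card (Inv D T') < card (Inv D T)"
  unfolding set_less_def set_le_def using star_props by blast

lemma chain_upper:
  assumes "finite D" shows "sorted_wrt (set_less D) xs \<Longrightarrow> xs \<noteq> [] \<Longrightarrow> length xs - 1 \<le> card (Inv D (hd xs))"
proof (induction xs)
  case Nil then show ?case by simp
next
  case (Cons a xs)
  show ?case
  proof (cases "xs = []")
    case True then show ?thesis by simp
  next
    case False
    then have "set_less D a (hd xs)" using Cons.prems by (cases xs) auto
    then have "card (Inv D (hd xs)) < card (Inv D a)" using less_card assms by blast
    moreover have "length xs - 1 \<le> card (Inv D (hd xs))" using Cons False by simp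
    ultimately show ?thesis using False by (cases xs) auto
  qed
qed


lemma descent_exists:
  assumes T: "T \<in> SET D"
  shows "x \<in> D \<Longrightarrow> y \<in> D \<Longrightarrow> T x < T y \<Longrightarrow> fst y < fst x \<Longrightarrow> \<exists>i. 1 \<le> i \<and> i + 1 \<le> card D \<and> lower D T i"
proof (induction "T y - T x" arbitrary: x)
  case 0 then show ?case by simp
next
  case (Suc n)
  have bij: "bij_betw T D {1..card D}" using T unfolding SET_def by auto
  have inj: "inj_on T D" and img: "T ` D = {1..card D}" using bij unfolding bij_betw_def by auto
  have "T y \<in> {1..card D}" "T x \<in> {1..card D}" using Suc.prems img by blast+
  then have "T x + 1 \<in> {1..card D}" using Suc.prems by auto
  then obtain x' where x': "x' \<in> D" "T x' = T x + 1" using img by (metis imageE)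
  have i1: "1 \<le> T x" using \<open>T x \<in> {1..card D}\<close> by auto
  show ?case
  proof (cases "fst x' < fst x")
    case True
    then have "lower D T (T x)" unfolding lower_def using x' Suc.prems by auto
    moreover have "T x' \<le> card D" using x' \<open>T x + 1 \<in> {1..card D}\<close> by auto
    ultimately show ?thesis using i1 x' by auto
  next
    case False
    have "x' \<noteq> y" using False Suc.prems by auto
    then have "T x' \<noteq> T y" using inj x' Suc.prems by (metis inj_on_eq_iff)
    then have "T x' < T y" using x' Suc.prems by auto
    moreover have "n = T y - T x'" using x' Suc.hyps by auto
    ultimately show ?thesis using Suc.hyps(1)[of x'] x' Suc.prems False by auto
  qed
qed


lemma chain_from:
  assumes fin: "finite D"
  shows "T \<in> SET D \<Longrightarrow> card (Inv D T) = n \<Longrightarrow> \<exists>xs. is_chain D xs \<and> hd xs = T \<and> length xs = n + 1"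
proof (induction n arbitrary: T)
  case 0 then show ?case unfolding is_chain_def by (intro exI[of _ "[T]"]) auto
next
  case (Suc n)
  have "Inv D T \<noteq> {}" using Suc.prems(2) by auto
  then obtain x y where p: "(x,y) \<in> Inv D T" by auto
  then have xy: "x \<in> D" "y \<in> D" "T x < T y" "fst y < fst x" unfolding Inv_def by auto
  obtain i where i: "1 \<le> i" "i + 1 \<le> card D" "lower D T i" using descent_exists[OF Suc.prems(1) xy] by blast
  then obtain u v where uv: "u \<in> D" "v \<in> D" "T u = i" "T v = i + 1" "fst v < fst u"
    unfolding lower_def by auto
  define T' where "T' = swap_entries i T"
  have sw: "T' \<in> SET D \<and> Inv D T' = Inv D T - {(u,v)} \<and> (u,v) \<in> Inv D T"
    using swap_props[OF Suc.prems(1) fin uv] T'_def by simp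
  have st: "pi_step D T T'" unfolding pi_step_def using i Suc.prems(1) T'_def by auto
  have cT': "card (Inv D T') = n" using sw Suc.prems(2) finite_Inv[OF fin] by simp
  obtain xs where xs: "is_chain D xs" "hd xs = T'" "length xs = n + 1"
    using Suc.IH[OF _ cT'] sw by blast
  have le: "set_le D T' z" if "z \<in> set xs" for z
  proof -
    have "z = hd xs \<or> z \<in> set (tl xs)" using that xs by (cases xs) auto
    then show ?thesis
    proof
      assume "z = hd xs" then show ?thesis using xs(2) sw unfolding set_le_def by simp
    next
      assume "z \<in> set (tl xs)"
      moreover from xs(1) have so: "sorted_wrt (set_less D) xs" "xs \<noteq> []" by (simp_all add: is_chain_def)
      moreover obtain t where "xs = T' # t" using so(2) xs(2) by (cases xs) auto
      ultimately have "set_less D T' z" by simp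
      then show ?thesis by (simp add: set_less_def)
    qed
  qed
  have less: "set_less D T z" if "z \<in> set xs" for z
  proof -
    have a: "(pi_step D)\<^sup>*\<^sup>* T' z" and zS: "z \<in> SET D" using le[OF that] unfolding set_le_def by auto
    have "(pi_step D)\<^sup>*\<^sup>* T z" using converse_rtranclp_into_rtranclp[of "pi_step D", OF st a] .
    moreover have "card (Inv D z) \<le> n" using star_props[OF a fin sw[THEN conjunct1]] cT' by auto
    moreover have "z \<noteq> T" using \<open>card (Inv D z) \<le> n\<close> Suc.prems(2) by auto
    ultimately show ?thesis unfolding set_less_def set_le_def using Suc.prems(1) zS by blast
  qed
  have "is_chain D (T # xs)"
    unfolding is_chain_def using xs(1) less Suc.prems(1) unfolding is_chain_def by simp
  then show ?case using xs(3) by (intro exI[of _ "T # xs"]) simp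
qed



lemma mem_lob: "x \<in> lobster_cells b c1 c2 \<longleftrightarrow>
   (fst x = 1 \<and> b+2 \<le> snd x \<and> snd x \<le> b+1+c2) \<or> (fst x = 2 \<and> 2 \<le> snd x \<and> snd x \<le> b+1) \<or>
   (fst x = 3 \<and> b+2 \<le> snd x \<and> snd x \<le> b+1+c1)"
  by (cases x) (auto simp: lobster_cells_def)

lemma finite_lob: "finite (lobster_cells b c1 c2)"
  by (rule finite_subset[of _ "{0..3} \<times> {0..b+1+c1+c2}"]) (auto simp: mem_lob)

lemma upper_bound:
  fixes b c1 c2 :: nat
  defines "D \<equiv> lobster_cells b c1 c2"
  assumes T: "T \<in> SET D"
  shows "card (Inv D T) \<le> b * max c1 c2 + (\<Sum>k\<in>{1..min c1 c2}. c2 - k)"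
proof -
  have rows: "\<And>r j j'. (r, j) \<in> D \<Longrightarrow> (r, j') \<in> D \<Longrightarrow> j < j' \<Longrightarrow> T (r, j) < T (r, j')"
    and cols: "\<And>r r' j. (r, j) \<in> D \<Longrightarrow> (r', j) \<in> D \<Longrightarrow> r < r' \<Longrightarrow> T (r, j) < T (r', j)"
    using T unfolding SET_def by auto
  define bot where "bot l = ((1::nat), b+1+l)" for l
  define top where "top k = ((3::nat), b+1+k)" for k
  have botD: "bot l \<in> D" if "1 \<le> l" "l \<le> c2" for l using that by (simp add: D_def mem_lob bot_def)
  have topD: "top k \<in> D" if "1 \<le> k" "k \<le> c1" for k using that by (simp add: D_def mem_lob top_def)
  have K: "T (bot l) < T (top k)" if "1 \<le> l" "l \<le> k" "k \<le> c1" "l \<le> c2" for l k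
  proof -
    have "T (bot l) < T (top l)" using cols[of 1 "b+1+l" 3] botD topD that unfolding bot_def top_def by auto
    moreover have "T (top l) \<le> T (top k)"
    proof (cases "l = k")
      case False
      then show ?thesis using rows[of 3 "b+1+l" "b+1+k"] topD that unfolding top_def by fastforce
    qed simp
    ultimately show ?thesis by simp
  qed
  define A where "A j = {l \<in> {1..c2}. T (2,j) < T (bot l)}" for j
  define B where "B j = {k \<in> {1..c1}. T (top k) < T (2,j)}" for j
  define M where "M j = (\<lambda>l. ((2::nat,j), bot l)) ` A j \<union> (\<lambda>k. (top k, (2::nat,j))) ` B j" for j
  define S where "S = (\<lambda>(k,l). (top k, bot l)) ` (SIGMA k:{1..min c1 c2}. {k+1..c2})"
  have AB: "card (A j) + card (B j) \<le> max c1 c2" for j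
  proof (cases "B j = {}")
    case True
    have "card (A j) \<le> card {1..c2}" unfolding A_def by (rule card_mono) auto
    then show ?thesis using True by simp
  next
    case False
    have finB: "finite (B j)" unfolding B_def by auto
    define p where "p = Max (B j)"
    have pB: "p \<in> B j" using Max_in[OF finB False] p_def by simp
    then have p1: "1 \<le> p" "p \<le> c1" and Tp: "T (top p) < T (2,j)" unfolding B_def by auto
    have "B j \<subseteq> {1..p}" using Max_ge[OF finB] p_def unfolding B_def by auto
    then have cB: "card (B j) \<le> p" using card_mono[of "{1..p}" "B j"] by simp
    have "B j \<subseteq> {1..c1}" unfolding B_def by auto
    then have cB2: "card (B j) \<le> c1"
      using card_mono[of "{1..c1}" "B j"] by simp
    have "A j \<subseteq> {p+1..c2}"
    proof
      fix l assume l: "l \<in> A j"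
      then have l1: "1 \<le> l" "l \<le> c2" and Tl: "T (2,j) < T (bot l)" unfolding A_def by auto
      have "\<not> l \<le> p"
      proof
        assume "l \<le> p"
        then have "T (bot l) < T (top p)" using K l1 p1 by auto
        then show False using Tp Tl by simp
      qed
      then show "l \<in> {p+1..c2}" using l1 by auto
    qed
    then have cA: "card (A j) \<le> c2 - p" using card_mono[of "{p+1..c2}" "A j"] by simp
    show ?thesis using cA cB cB2 by (cases "p \<le> c2") auto
  qed
  have cM: "card (M j) \<le> max c1 c2" for j
  proof -
    have "card (M j) \<le> card ((\<lambda>l. ((2::nat,j), bot l)) ` A j) + card ((\<lambda>k. (top k, (2::nat,j))) ` B j)"
      unfolding M_def by (rule card_Un_le)
    also have "\<dots> \<le> card (A j) + card (B j)" by (intro add_mono card_image_le) (auto simp: A_def B_def)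
    finally show ?thesis using AB[of j] by simp
  qed
  have cU: "card (\<Union>j\<in>{2..b+1}. M j) \<le> b * max c1 c2"
  proof -
    have "card (\<Union>j\<in>{2..b+1}. M j) \<le> (\<Sum>j\<in>{2..b+1}. card (M j))" by (rule card_UN_le) simp
    also have "\<dots> \<le> card {2..b+1} * max c1 c2" using sum_bounded_above[of "{2..b+1}" "\<lambda>j. card (M j)" "max c1 c2"] cM by simp
    finally show ?thesis by simp
  qed
  have cS: "card S \<le> (\<Sum>k\<in>{1..min c1 c2}. c2 - k)"
  proof -
    have "card S \<le> card (SIGMA k:{1..min c1 c2}. {k+1..c2})" unfolding S_def by (rule card_image_le) auto
    also have "\<dots> = (\<Sum>k\<in>{1..min c1 c2}. card {k+1..c2})" by (rule card_SigmaI) auto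
    finally show ?thesis by simp
  qed
  have sub: "Inv D T \<subseteq> (\<Union>j\<in>{2..b+1}. M j) \<union> S"
  proof
    fix z assume z: "z \<in> Inv D T"
    then obtain x y where zxy: "z = (x,y)" and x: "x \<in> D" and y: "y \<in> D" and xy: "fst y < fst x" and Txy: "T x < T y"
      unfolding Inv_def by auto
    obtain rx jx where xe: "x = (rx, jx)" by (cases x)
    obtain ry jy where ye: "y = (ry, jy)" by (cases y)
    have xD: "(rx = 1 \<and> b+2 \<le> jx \<and> jx \<le> b+1+c2) \<or> (rx = 2 \<and> 2 \<le> jx \<and> jx \<le> b+1) \<or> (rx = 3 \<and> b+2 \<le> jx \<and> jx \<le> b+1+c1)"
      using x xe by (simp add: D_def mem_lob)
    have yD: "(ry = 1 \<and> b+2 \<le> jy \<and> jy \<le> b+1+c2) \<or> (ry = 2 \<and> 2 \<le> jy \<and> jy \<le> b+1) \<or> (ry = 3 \<and> b+2 \<le> jy \<and> jy \<le> b+1+c1)"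
      using y ye by (simp add: D_def mem_lob)
    have r: "ry < rx" using xy xe ye by simp
    consider "rx = 2" "ry = 1" | "rx = 3" "ry = 2" | "rx = 3" "ry = 1" using xD yD r by auto
    then show "z \<in> (\<Union>j\<in>{2..b+1}. M j) \<union> S"
    proof cases
      case 1
      define l where "l = jy - (b+1)"
      have jy: "jy = b+1+l" "1 \<le> l" "l \<le> c2" using yD 1 l_def by auto
      have "l \<in> A jx" unfolding A_def using jy Txy xe ye 1 by (auto simp: bot_def)
      then have "z \<in> M jx" unfolding M_def using zxy xe ye 1 jy by (auto simp: bot_def)
      moreover have "jx \<in> {2..b+1}" using xD 1 by auto
      ultimately show ?thesis by blast
    next
      case 2
      define k where "k = jx - (b+1)"
      have jx: "jx = b+1+k" "1 \<le> k" "k \<le> c1" using xD 2 k_def by auto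
      have "k \<in> B jy" unfolding B_def using jx Txy xe ye 2 by (auto simp: top_def)
      then have "z \<in> M jy" unfolding M_def using zxy xe ye 2 jx by (auto simp: top_def)
      moreover have "jy \<in> {2..b+1}" using yD 2 by auto
      ultimately show ?thesis by blast
    next
      case 3
      define k where "k = jx - (b+1)"
      have jx: "jx = b+1+k" "1 \<le> k" "k \<le> c1" using xD 3 k_def by auto
      define l where "l = jy - (b+1)"
      have jy: "jy = b+1+l" "1 \<le> l" "l \<le> c2" using yD 3 l_def by auto
      have "\<not> l \<le> k"
      proof
        assume "l \<le> k"
        then have "T (bot l) < T (top k)" using K jx jy by auto
        then show False using Txy xe ye 3 jx jy by (simp add: bot_def top_def)
      qed
      then have "(k,l) \<in> (SIGMA k:{1..min c1 c2}. {k+1..c2})" using jx jy by auto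
      moreover have "z = (\<lambda>(k,l). (top k, bot l)) (k,l)" using zxy xe ye 3 jx jy by (simp add: bot_def top_def)
      ultimately have "z \<in> S" unfolding S_def by blast
      then show ?thesis by blast
    qed
  qed
  have finU: "finite ((\<Union>j\<in>{2..b+1}. M j) \<union> S)"
    unfolding M_def S_def A_def B_def by auto
  have "card (Inv D T) \<le> card ((\<Union>j\<in>{2..b+1}. M j) \<union> S)" by (rule card_mono[OF finU sub])
  also have "\<dots> \<le> card (\<Union>j\<in>{2..b+1}. M j) + card S" by (rule card_Un_le)
  finally show ?thesis using cU cS by simp
qed



definition vb :: "nat \<Rightarrow> nat \<Rightarrow> nat \<Rightarrow> nat \<Rightarrow> nat" where
  "vb b c1 c2 l = (if l \<le> min c1 c2 then (if c1 \<le> c2 then b else 0) + 2*l - 1 else (if c1 \<le> c2 then b else 0) + min c1 c2 + l)"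
definition vt :: "nat \<Rightarrow> nat \<Rightarrow> nat \<Rightarrow> nat \<Rightarrow> nat" where
  "vt b c1 c2 k = (if k \<le> min c1 c2 then (if c1 \<le> c2 then b else 0) + 2*k else (if c1 \<le> c2 then b else 0) + min c1 c2 + k)"
definition vm :: "nat \<Rightarrow> nat \<Rightarrow> nat \<Rightarrow> nat \<Rightarrow> nat" where
  "vm b c1 c2 j = (if c1 \<le> c2 then j - 1 else c1 + c2 + j - 1)"

lemma ar_bt: "1 \<le> l \<Longrightarrow> l \<le> c2 \<Longrightarrow> 1 \<le> k \<Longrightarrow> k \<le> c1 \<Longrightarrow> vb b c1 c2 l \<noteq> vt b c1 c2 k"
  unfolding vb_def vt_def
  by (cases "c1 \<le> c2"; cases "l \<le> min c1 c2"; cases "k \<le> min c1 c2"; simp add: min_def; presburger)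
lemma ar_bb: "1 \<le> l \<Longrightarrow> l \<le> c2 \<Longrightarrow> 1 \<le> l' \<Longrightarrow> l' \<le> c2 \<Longrightarrow> vb b c1 c2 l = vb b c1 c2 l' \<Longrightarrow> l = l'"
  unfolding vb_def
  by (cases "c1 \<le> c2"; cases "l \<le> min c1 c2"; cases "l' \<le> min c1 c2"; auto simp: min_def)
lemma ar_tt: "1 \<le> l \<Longrightarrow> l \<le> c1 \<Longrightarrow> 1 \<le> l' \<Longrightarrow> l' \<le> c1 \<Longrightarrow> vt b c1 c2 l = vt b c1 c2 l' \<Longrightarrow> l = l'"
  unfolding vt_def
  by (cases "c1 \<le> c2"; cases "l \<le> min c1 c2"; cases "l' \<le> min c1 c2"; auto simp: min_def)
lemma ar_mm: "2 \<le> j \<Longrightarrow> 2 \<le> j' \<Longrightarrow> vm b c1 c2 j = vm b c1 c2 j' \<Longrightarrow> j = j'"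
  unfolding vm_def by (cases "c1 \<le> c2"; auto)
lemma ar_bm: "1 \<le> l \<Longrightarrow> l \<le> c2 \<Longrightarrow> 2 \<le> j \<Longrightarrow> j \<le> b+1 \<Longrightarrow> vb b c1 c2 l \<noteq> vm b c1 c2 j"
  unfolding vb_def vm_def
  by (cases "c1 \<le> c2"; cases "l \<le> min c1 c2"; auto simp: min_def)
lemma ar_tm: "1 \<le> k \<Longrightarrow> k \<le> c1 \<Longrightarrow> 2 \<le> j \<Longrightarrow> j \<le> b+1 \<Longrightarrow> vt b c1 c2 k \<noteq> vm b c1 c2 j"
  unfolding vt_def vm_def
  by (cases "c1 \<le> c2"; cases "k \<le> min c1 c2"; auto simp: min_def)
lemma rb: "1 \<le> l \<Longrightarrow> l \<le> c2 \<Longrightarrow> vb b c1 c2 l \<in> {1..b+c1+c2}"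
  unfolding vb_def by (cases "c1 \<le> c2"; cases "l \<le> min c1 c2"; auto simp: min_def)
lemma rt: "1 \<le> k \<Longrightarrow> k \<le> c1 \<Longrightarrow> vt b c1 c2 k \<in> {1..b+c1+c2}"
  unfolding vt_def by (cases "c1 \<le> c2"; cases "k \<le> min c1 c2"; auto simp: min_def)
lemma rm: "2 \<le> j \<Longrightarrow> j \<le> b+1 \<Longrightarrow> vm b c1 c2 j \<in> {1..b+c1+c2}"
  unfolding vm_def by (cases "c1 \<le> c2"; auto)
lemma mb: "1 \<le> l \<Longrightarrow> l < l' \<Longrightarrow> l' \<le> c2 \<Longrightarrow> vb b c1 c2 l < vb b c1 c2 l'"
  unfolding vb_def by (cases "c1 \<le> c2"; cases "l \<le> min c1 c2"; cases "l' \<le> min c1 c2"; auto simp: min_def)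
lemma mt: "1 \<le> l \<Longrightarrow> l < l' \<Longrightarrow> l' \<le> c1 \<Longrightarrow> vt b c1 c2 l < vt b c1 c2 l'"
  unfolding vt_def by (cases "c1 \<le> c2"; cases "l \<le> min c1 c2"; cases "l' \<le> min c1 c2"; auto simp: min_def)
lemma mm: "2 \<le> j \<Longrightarrow> j < j' \<Longrightarrow> vm b c1 c2 j < vm b c1 c2 j'"
  unfolding vm_def by (cases "c1 \<le> c2"; auto)
lemma cbt: "1 \<le> l \<Longrightarrow> l \<le> c2 \<Longrightarrow> l \<le> c1 \<Longrightarrow> vb b c1 c2 l < vt b c1 c2 l"
  unfolding vb_def vt_def by (cases "c1 \<le> c2"; auto simp: min_def)
lemma ibt: "1 \<le> k \<Longrightarrow> k \<le> min c1 c2 \<Longrightarrow> k < l \<Longrightarrow> l \<le> c2 \<Longrightarrow> vt b c1 c2 k < vb b c1 c2 l"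
  unfolding vb_def vt_def by (cases "c1 \<le> c2"; cases "l \<le> min c1 c2"; auto simp: min_def)
lemma imb: "c1 \<le> c2 \<Longrightarrow> 2 \<le> j \<Longrightarrow> j \<le> b+1 \<Longrightarrow> 1 \<le> l \<Longrightarrow> l \<le> c2 \<Longrightarrow> vm b c1 c2 j < vb b c1 c2 l"
  unfolding vb_def vm_def by (cases "l \<le> min c1 c2"; auto simp: min_def)
lemma itm: "\<not> c1 \<le> c2 \<Longrightarrow> 2 \<le> j \<Longrightarrow> 1 \<le> k \<Longrightarrow> k \<le> c1 \<Longrightarrow> vt b c1 c2 k < vm b c1 c2 j"
  unfolding vt_def vm_def by (cases "k \<le> min c1 c2"; auto simp: min_def)

definition T0 :: "nat \<Rightarrow> nat \<Rightarrow> nat \<Rightarrow> (nat \<times> nat) \<Rightarrow> nat" where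
"T0 b c1 c2 x = (if x \<notin> lobster_cells b c1 c2 then 0
   else if fst x = 1 then vb b c1 c2 (snd x - (b+1))
   else if fst x = 3 then vt b c1 c2 (snd x - (b+1))
   else vm b c1 c2 (snd x))"

lemma cell_cases:
  assumes "u \<in> lobster_cells b c1 c2"
  obtains (bot) l where "1 \<le> l" "l \<le> c2" "u = (1, b+1+l)"
    | (mid) j where "2 \<le> j" "j \<le> b+1" "u = (2, j)"
    | (top) k where "1 \<le> k" "k \<le> c1" "u = (3, b+1+k)"
proof -
  obtain r j where e: "u = (r,j)" by (cases u)
  have "(r = 1 \<and> b+2 \<le> j \<and> j \<le> b+1+c2) \<or> (r = 2 \<and> 2 \<le> j \<and> j \<le> b+1) \<or> (r = 3 \<and> b+2 \<le> j \<and> j \<le> b+1+c1)"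
    using assms e by (simp add: mem_lob)
  then consider "r = 1" "b+2 \<le> j" "j \<le> b+1+c2" | "r = 2" "2 \<le> j" "j \<le> b+1" | "r = 3" "b+2 \<le> j" "j \<le> b+1+c1"
    by blast
  then show ?thesis
  proof cases
    case 1 then show ?thesis using bot[of "j - (b+1)"] e by auto
  next
    case 2 then show ?thesis using mid[of j] e by auto
  next
    case 3 then show ?thesis using top[of "j - (b+1)"] e by auto
  qed
qed

lemma T0_bot: "1 \<le> l \<Longrightarrow> l \<le> c2 \<Longrightarrow> T0 b c1 c2 (1, b+1+l) = vb b c1 c2 l"
  unfolding T0_def by (simp add: mem_lob)
lemma T0_top: "1 \<le> k \<Longrightarrow> k \<le> c1 \<Longrightarrow> T0 b c1 c2 (3, b+1+k) = vt b c1 c2 k"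
  unfolding T0_def by (simp add: mem_lob)
lemma T0_mid: "2 \<le> j \<Longrightarrow> j \<le> b+1 \<Longrightarrow> T0 b c1 c2 (2, j) = vm b c1 c2 j"
  unfolding T0_def by (simp add: mem_lob)

lemma T0_cases:
  assumes u: "u \<in> lobster_cells b c1 c2"
  obtains (bot) l where "1 \<le> l" "l \<le> c2" "u = (1, b+1+l)" "T0 b c1 c2 u = vb b c1 c2 l"
    | (mid) j where "2 \<le> j" "j \<le> b+1" "u = (2, j)" "T0 b c1 c2 u = vm b c1 c2 j"
    | (top) k where "1 \<le> k" "k \<le> c1" "u = (3, b+1+k)" "T0 b c1 c2 u = vt b c1 c2 k"
  using u
proof (cases rule: cell_cases)
  case (bot l) then show ?thesis using that(1)[of l] T0_bot[of l c2 b c1] by simp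
next
  case (mid j) then show ?thesis using that(2)[of j] T0_mid[of j b c1 c2] by simp
next
  case (top k) then show ?thesis using that(3)[of k] T0_top[of k c1 b c2] by simp
qed

lemma T0_inj:
  assumes u: "u \<in> lobster_cells b c1 c2" and v: "v \<in> lobster_cells b c1 c2" and e: "T0 b c1 c2 u = T0 b c1 c2 v"
  shows "u = v"
  using u
proof (cases rule: T0_cases)
  case (bot l)
  note hu = bot(4) and ue = bot(3) and lb = bot(1) bot(2)
  from v show ?thesis
  proof (cases rule: T0_cases)
    case (bot l')
    have "vb b c1 c2 l = vb b c1 c2 l'" using e hu bot(4) by simp
    then have "l = l'" by (rule ar_bb[OF lb bot(1,2)])
    then show ?thesis using ue bot(3) by simp
  next
    case (mid j') then show ?thesis using ar_bm[where ?c1.0=c1 and ?c2.0=c2 and b=b, OF lb mid(1,2)] e hu by simp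
  next
    case (top k') then show ?thesis using ar_bt[where ?c1.0=c1 and ?c2.0=c2 and b=b, OF lb top(1,2)] e hu by simp
  qed
next
  case (mid j)
  note hu = mid(4) and ue = mid(3) and lb = mid(1) mid(2)
  from v show ?thesis
  proof (cases rule: T0_cases)
    case (bot l') then show ?thesis using ar_bm[where ?c1.0=c1 and ?c2.0=c2 and b=b, OF bot(1,2) lb] e hu by simp
  next
    case (mid j')
    have "vm b c1 c2 j = vm b c1 c2 j'" using e hu mid(4) by simp
    then have "j = j'" by (rule ar_mm[OF lb(1) mid(1)])
    then show ?thesis using ue mid(3) by simp
  next
    case (top k') then show ?thesis using ar_tm[where ?c1.0=c1 and ?c2.0=c2 and b=b, OF top(1,2) lb] e hu by simp
  qed
next
  case (top k)
  note hu = top(4) and ue = top(3) and lb = top(1) top(2)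
  from v show ?thesis
  proof (cases rule: T0_cases)
    case (bot l') then show ?thesis using ar_bt[where ?c1.0=c1 and ?c2.0=c2 and b=b, OF bot(1,2) lb] e hu by simp
  next
    case (mid j') then show ?thesis using ar_tm[where ?c1.0=c1 and ?c2.0=c2 and b=b, OF lb mid(1,2)] e hu by simp
  next
    case (top k')
    have "vt b c1 c2 k = vt b c1 c2 k'" using e hu top(4) by simp
    then have "k = k'" by (rule ar_tt[OF lb top(1,2)])
    then show ?thesis using ue top(3) by simp
  qed
qed

lemma T0_range: assumes "u \<in> lobster_cells b c1 c2" shows "T0 b c1 c2 u \<in> {1..b+c1+c2}"
  using assms
proof (cases rule: T0_cases)
  case (bot l) then show ?thesis using rb[of l c2 b c1] by simp
next
  case (mid j) then show ?thesis using rm[of j b c1 c2] by simp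
next
  case (top k) then show ?thesis using rt[of k c1 b c2] by simp
qed

lemma card_lob: "card (lobster_cells b c1 c2) = b + c1 + c2"
proof -
  define A where "A = (\<lambda>l. (1::nat, b+1+l)) ` {1..c2}"
  define B where "B = (\<lambda>j. (2::nat, j)) ` {2..b+1}"
  define C where "C = (\<lambda>k. (3::nat, b+1+k)) ` {1..c1}"
  have e: "lobster_cells b c1 c2 = (A \<union> B) \<union> C"
    unfolding A_def B_def C_def by (auto elim!: cell_cases simp: mem_lob image_iff)
  have cA: "card A = c2" unfolding A_def by (subst card_image) (auto simp: inj_on_def)
  have cB: "card B = b" unfolding B_def by (subst card_image) (auto simp: inj_on_def)
  have cC: "card C = c1" unfolding C_def by (subst card_image) (auto simp: inj_on_def)
  have f: "finite A" "finite B" "finite C" unfolding A_def B_def C_def by auto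
  have d1: "A \<inter> B = {}" "(A \<union> B) \<inter> C = {}" unfolding A_def B_def C_def by auto
  have "card ((A \<union> B) \<union> C) = card (A \<union> B) + card C" using f d1 by (intro card_Un_disjoint) auto
  also have "card (A \<union> B) = card A + card B" using f d1 by (intro card_Un_disjoint) auto
  finally show ?thesis using e cA cB cC by simp
qed



lemma T0_SET: "T0 b c1 c2 \<in> SET (lobster_cells b c1 c2)"
proof -
  let ?D = "lobster_cells b c1 c2"
  let ?T = "T0 b c1 c2"
  have inj: "inj_on ?T ?D" by (rule inj_onI) (rule T0_inj)
  have sub: "?T ` ?D \<subseteq> {1..card ?D}" using T0_range card_lob by auto
  have "card (?T ` ?D) = card {1..card ?D}" using card_image[OF inj] by simp
  then have img: "?T ` ?D = {1..card ?D}" using card_subset_eq[OF _ sub] by simp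
  have zero: "\<forall>x. x \<notin> ?D \<longrightarrow> ?T x = 0" unfolding T0_def by simp
  have rows: "?T (r, j) < ?T (r, j')" if a: "(r, j) \<in> ?D" "(r, j') \<in> ?D" "j < j'" for r j j'
    using a(1)
  proof (cases rule: T0_cases)
    case (bot l)
    from a(2) show ?thesis
    proof (cases rule: T0_cases)
      case (bot l') then show ?thesis using \<open>(r,j) = _\<close> \<open>?T (r,j) = _\<close> mb[of l l' c2 b c1] \<open>1 \<le> l\<close> a(3) by auto
    qed (use \<open>(r,j) = _\<close> in auto)
  next
    case (mid m)
    from a(2) show ?thesis
    proof (cases rule: T0_cases)
      case (mid m') then show ?thesis using \<open>(r,j) = _\<close> \<open>?T (r,j) = _\<close> mm[of m m' b c1 c2] \<open>2 \<le> m\<close> a(3) by auto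
    qed (use \<open>(r,j) = _\<close> in auto)
  next
    case (top k)
    from a(2) show ?thesis
    proof (cases rule: T0_cases)
      case (top k') then show ?thesis using \<open>(r,j) = _\<close> \<open>?T (r,j) = _\<close> mt[of k k' c1 b c2] \<open>1 \<le> k\<close> a(3) by auto
    qed (use \<open>(r,j) = _\<close> in auto)
  qed
  have cols: "?T (r, j) < ?T (r', j)" if a: "(r, j) \<in> ?D" "(r', j) \<in> ?D" "r < r'" for r r' j
    using a(1)
  proof (cases rule: T0_cases)
    case (bot l)
    note B = this
    from a(2) show ?thesis
    proof (cases rule: T0_cases)
      case (top k)
      then have "k = l" using B(3) by simp
      then show ?thesis using B top cbt[of l c2 c1 b] by simp
    qed (use B a(3) in auto)
  next
    case (mid m)
    note B = this
    from a(2) show ?thesis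
      by (cases rule: T0_cases) (use B a(3) in auto)
  next
    case (top k)
    note B = this
    from a(2) show ?thesis
      by (cases rule: T0_cases) (use B a(3) in auto)
  qed
  show ?thesis unfolding SET_def bij_betw_def using inj img zero rows cols by blast
qed

lemma T0_lower:
  "b * max c1 c2 + (\<Sum>k\<in>{1..min c1 c2}. c2 - k) \<le> card (Inv (lobster_cells b c1 c2) (T0 b c1 c2))"
proof -
  let ?D = "lobster_cells b c1 c2"
  let ?T = "T0 b c1 c2"
  have finI: "finite (Inv ?D ?T)" by (rule finite_Inv[OF finite_lob])
  define S2 where "S2 = (\<lambda>(k,l). ((3::nat,b+1+k),(1::nat,b+1+l))) ` (SIGMA k:{1..min c1 c2}. {k+1..c2})"
  have S2I: "S2 \<subseteq> Inv ?D ?T"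
  proof
    fix z assume "z \<in> S2"
    then obtain k l where z: "z = ((3,b+1+k),(1,b+1+l))" and kl: "1 \<le> k" "k \<le> min c1 c2" "k < l" "l \<le> c2"
      unfolding S2_def by auto
    have "?T (3,b+1+k) < ?T (1,b+1+l)"
      apply (subst T0_top) using kl apply simp_all[2]
      apply (subst T0_bot) using kl apply simp_all[2]
      using ibt[OF kl] .
    then show "z \<in> Inv ?D ?T" unfolding Inv_def z using kl by (auto simp: mem_lob)
  qed
  have cS2: "card S2 = (\<Sum>k\<in>{1..min c1 c2}. c2 - k)"
  proof -
    have "card S2 = card (SIGMA k:{1..min c1 c2}. {k+1..c2})" unfolding S2_def
      by (rule card_image) (auto simp: inj_on_def)
    also have "\<dots> = (\<Sum>k\<in>{1..min c1 c2}. card {k+1..c2})" by (rule card_SigmaI) auto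
    finally show ?thesis by simp
  qed
  show ?thesis
  proof (cases "c1 \<le> c2")
    case True
    define S1 where "S1 = (\<lambda>(j,l). ((2::nat,j),(1::nat,b+1+l))) ` ({2..b+1} \<times> {1..c2})"
    have S1I: "S1 \<subseteq> Inv ?D ?T"
    proof
      fix z assume "z \<in> S1"
      then obtain j l where z: "z = ((2,j),(1,b+1+l))" and jl: "2 \<le> j" "j \<le> b+1" "1 \<le> l" "l \<le> c2"
        unfolding S1_def by auto
      have "?T (2,j) < ?T (1,b+1+l)"
        apply (subst T0_mid) using jl apply simp_all[2]
        apply (subst T0_bot) using jl apply simp_all[2]
        using imb[OF True jl] .
      then show "z \<in> Inv ?D ?T" unfolding Inv_def z using jl by (auto simp: mem_lob)
    qed
    have cS1: "card S1 = b * c2" unfolding S1_def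
      by (subst card_image) (auto simp: inj_on_def)
    have d: "S1 \<inter> S2 = {}" unfolding S1_def S2_def by auto
    have "card (S1 \<union> S2) = card S1 + card S2"
      by (rule card_Un_disjoint) (auto simp: S1_def S2_def d)
    moreover have "card (S1 \<union> S2) \<le> card (Inv ?D ?T)" using S1I S2I finI by (intro card_mono) auto
    ultimately show ?thesis using cS1 cS2 True by (simp add: max_def)
  next
    case False
    define S1 where "S1 = (\<lambda>(k,j). ((3::nat,b+1+k),(2::nat,j))) ` ({1..c1} \<times> {2..b+1})"
    have S1I: "S1 \<subseteq> Inv ?D ?T"
    proof
      fix z assume "z \<in> S1"
      then obtain j k where z: "z = ((3,b+1+k),(2,j))" and jl: "2 \<le> j" "j \<le> b+1" "1 \<le> k" "k \<le> c1"
        unfolding S1_def by auto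
      have "?T (3,b+1+k) < ?T (2,j)"
        apply (subst T0_mid) using jl apply simp_all[2]
        apply (subst T0_top) using jl apply simp_all[2]
        using itm[OF False jl(1) jl(3) jl(4)] .
      then show "z \<in> Inv ?D ?T" unfolding Inv_def z using jl by (auto simp: mem_lob)
    qed
    have cS1: "card S1 = c1 * b" unfolding S1_def
      by (subst card_image) (auto simp: inj_on_def)
    have d: "S1 \<inter> S2 = {}" unfolding S1_def S2_def by auto
    have "card (S1 \<union> S2) = card S1 + card S2"
      by (rule card_Un_disjoint) (auto simp: S1_def S2_def d)
    moreover have "card (S1 \<union> S2) \<le> card (Inv ?D ?T)" using S1I S2I finI by (intro card_mono) auto
    ultimately show ?thesis using cS1 cS2 False by (simp add: max_def mult.commute)
  qed
qed



lemma sumF: "p \<le> c \<Longrightarrow> 2 * (\<Sum>k\<in>{1..p}. c - k) + p*(p+1) = 2*p*(c::nat)"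
proof (induction p)
  case 0 then show ?case by simp
next
  case (Suc p)
  obtain d where c: "c = Suc p + d" using Suc.prems le_Suc_ex by blast
  have "(\<Sum>k\<in>{1..Suc p}. c - k) = (\<Sum>k\<in>{1..p}. c - k) + (c - Suc p)" by simp
  then show ?case using Suc c by (simp add: algebra_simps)
qed

lemma two_choose: "2 * (n choose 2) = n * (n - 1)"
  by (induction n) (auto simp: numeral_2_eq_2 algebra_simps)

lemma R_eq:
  "b * max c1 c2 + (\<Sum>k\<in>{1..min c1 c2}. c2 - k) =
   (if c1 \<le> c2 then c2 * (b + c1) - (c1 + 1 choose 2) else b * c1 + (c2 choose 2))"
proof (cases "c1 \<le> c2")
  case True
  have s: "2 * (\<Sum>k\<in>{1..c1}. c2 - k) + c1*(c1+1) = 2*c1*c2" using sumF[OF True] .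
  have t: "2 * (c1 + 1 choose 2) = (c1+1) * c1" using two_choose[of "c1+1"] by simp
  have "c2 * (b + c1) = c2 * b + c1 * c2" by (simp add: algebra_simps)
  then show ?thesis using True s t by (simp add: max_def min_def algebra_simps)
next
  case False
  have s: "2 * (\<Sum>k\<in>{1..c2}. c2 - k) + c2*(c2+1) = 2*c2*c2" using sumF[of c2 c2] by simp
  have t: "2 * (c2 choose 2) = c2 * (c2 - 1)" using two_choose .
  have "c2 * (c2 - 1) + c2 * 2 = c2 * (c2 + 1)" by (cases c2) (auto simp: algebra_simps)
  then have "(\<Sum>k\<in>{1..c2}. c2 - k) = (c2 choose 2)" using s t by (simp add: algebra_simps)
  then show ?thesis using False by (simp add: max_def min_def mult.commute)
qed


theorem corollary5p10:
  fixes b c1 c2 :: nat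
  assumes "0 < b" and "0 < c1" and "0 < c2"
  defines "D \<equiv> lobster_cells b c1 c2"
  defines "r \<equiv> (if c1 \<le> c2 then c2 * (b + c1) - (c1 + 1 choose 2) else b * c1 + (c2 choose 2))"
  shows "(\<exists>xs. is_chain D xs \<and> length xs - 1 = r) \<and>
         (\<forall>xs. is_chain D xs \<longrightarrow> length xs - 1 \<le> r)"
proof
  have fin: "finite D" unfolding D_def by (rule finite_lob)
  have Rr: "b * max c1 c2 + (\<Sum>k\<in>{1..min c1 c2}. c2 - k) = r" unfolding r_def by (rule R_eq)
  show "\<forall>xs. is_chain D xs \<longrightarrow> length xs - 1 \<le> r"
  proof (intro allI impI)
    fix xs assume c: "is_chain D xs"
    then have ne: "xs \<noteq> []" and s: "sorted_wrt (set_less D) xs" and sub: "set xs \<subseteq> SET D"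
      unfolding is_chain_def by auto
    have "hd xs \<in> SET D" using ne sub by (cases xs) auto
    then have "card (Inv D (hd xs)) \<le> r" using upper_bound[of "hd xs" b c1 c2] Rr unfolding D_def by simp
    moreover have "length xs - 1 \<le> card (Inv D (hd xs))" by (rule chain_upper[OF fin s ne])
    ultimately show "length xs - 1 \<le> r" by simp
  qed
  show "\<exists>xs. is_chain D xs \<and> length xs - 1 = r"
  proof -
    have T: "T0 b c1 c2 \<in> SET D" unfolding D_def by (rule T0_SET)
    have le: "r \<le> card (Inv D (T0 b c1 c2))" using T0_lower[of b c1 c2] Rr unfolding D_def by simp
    obtain xs where xs: "is_chain D xs" "length xs = card (Inv D (T0 b c1 c2)) + 1"
      using chain_from[OF fin T refl] by blast
    have "is_chain D (take (r+1) xs)"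
      using xs unfolding is_chain_def by (auto dest: in_set_takeD)
    moreover have "length (take (r+1) xs) - 1 = r" using xs(2) le by simp
    ultimately show ?thesis by blast
  qed
qed

end
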